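(* Let $F_1,F_2$ be bijections of $\mathbb F_2^m$ with $F_1(0)=F_2(0)=0$, and $S=STS(\mathcal H^n)$. If the self-embeddings $S\cup F_1(S)$ and $S\cup F_2(S)$ are isomorphic, then the codes $\mathcal C_{F_1}$ and $\mathcal C_{F_2}$ are equivalent.
   Context: $n=2^m-1$; identify $\mathbb F_2^m$ with $GF(2^m)$. $S=STS(\mathcal H^n)$ is the set of 3-subsets $\{a,b,c\}$ of nonzero elements with $a+b+c=0$; $F(S)=\{\{F(a),F(b),F(c)\}:\{a,b,c\}\in S\}$. Self-embeddings $S\cup F_1(S)$, $S\cup F_2(S)$ are isomorphic if there is a permutation $\sigma$ of the nonzero elements with either $\sigma(S)=S,\sigma(F_1(S))=F_2(S)$ or $\sigma(S)=F_2(S),\sigma(F_1(S))=S$. For a bijection $F$ with $F(0)=0$, $\mathcal C_F$ is the binary linear code of length $n$ whose parity-check matrix is the $2m\times n$ matrix whose columns are $\binom{x}{F(x)}$, $x$ ranging over the nonzero vectors of $\mathbb F_2^m$ (coordinates indexed by the nonzero $x$). Two binary codes of length $n$ are equivalent if one is obtained from the other by a coordinate permutation and a translation (for linear codes, equivalently by a coordinate permutation). *)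

theory Defs
  imports "HOL-Analysis.Analysis" "HOL-Library.Z2"
begin

text \<open>The space F_2^m is modelled as bit^'m (m = CARD('m)); the field structure of GF(2^m)
  is not needed. Coordinates of codes of length n = 2^m - 1 are the nonzero vectors.\<close>

definition nonzero_vecs :: "(bit ^ 'm) set" where
  "nonzero_vecs = UNIV - {0}"

definition STS_H :: "(bit ^ 'm) set set" where
  "STS_H = {{a, b, c} | a b c. a \<noteq> 0 \<and> b \<noteq> 0 \<and> c \<noteq> 0 \<and>
              a \<noteq> b \<and> a \<noteq> c \<and> b \<noteq> c \<and> a + b + c = 0}"

definition blocks_image :: "('a \<Rightarrow> 'b) \<Rightarrow> 'a set set \<Rightarrow> 'b set set" where
  "blocks_image F S = (\<lambda>B. F ` B) ` S"

definition self_emb_iso :: "(bit ^ 'm \<Rightarrow> bit ^ 'm) \<Rightarrow> (bit ^ 'm \<Rightarrow> bit ^ 'm) \<Rightarrow> bool" where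
  "self_emb_iso F1 F2 \<longleftrightarrow>
     (\<exists>\<sigma>. bij_betw \<sigma> nonzero_vecs nonzero_vecs \<and>
        ((blocks_image \<sigma> STS_H = STS_H \<and>
          blocks_image \<sigma> (blocks_image F1 STS_H) = blocks_image F2 STS_H) \<or>
         (blocks_image \<sigma> STS_H = blocks_image F2 STS_H \<and>
          blocks_image \<sigma> (blocks_image F1 STS_H) = STS_H)))"

text \<open>The code C_F: binary words of length n indexed by the nonzero vectors, a word being
  identified with its support A. A is a codeword iff the sum of the columns (x, F x), x \<in> A,
  of the parity-check matrix is zero.\<close>
definition code_F :: "(bit ^ 'm \<Rightarrow> bit ^ 'm) \<Rightarrow> (bit ^ 'm) set set" where
  "code_F F = {A. A \<subseteq> nonzero_vecs \<and> (\<Sum>x\<in>A. x) = 0 \<and> (\<Sum>x\<in>A. F x) = 0}"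

text \<open>Equivalence of binary codes (sets of supports of words with coordinate set N):
  a coordinate permutation followed by a translation (symmetric difference with T).\<close>
definition codes_equiv :: "'a set \<Rightarrow> 'a set set \<Rightarrow> 'a set set \<Rightarrow> bool" where
  "codes_equiv N C1 C2 \<longleftrightarrow>
     (\<exists>\<pi> T. bij_betw \<pi> N N \<and> T \<subseteq> N \<and>
        C2 = (\<lambda>c. (\<pi> ` c - T) \<union> (T - \<pi> ` c)) ` C1)"

end

theory Submission
  imports Defs
begin

lemma char2: "(x::bit^'m) + x = 0"
proof -
  have "\<And>b::bit. b + b = 0" by (metis add_bit_eq_xor xor_self_eq)
  thus ?thesis by (simp add: vec_eq_iff)
qed

lemma blocks_image_comp: "blocks_image (f \<circ> g) S = blocks_image f (blocks_image g S)"
  by (auto simp: blocks_image_def image_comp)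

lemma blocks_image_inv: "bij F \<Longrightarrow> blocks_image (inv F) (blocks_image F S) = S"
proof -
  assume "bij F"
  hence "inv F \<circ> F = id" by (simp add: bij_is_inj inv_o_cancel)
  thus ?thesis by (metis blocks_image_comp blocks_image_def image_id id_apply image_ident)
qed

lemma triple_in: "a \<noteq> 0 \<Longrightarrow> b \<noteq> 0 \<Longrightarrow> a \<noteq> b \<Longrightarrow> {a, b, a + b} \<in> (STS_H :: (bit^'m) set set)"
proof -
  assume h: "a \<noteq> 0" "b \<noteq> 0" "a \<noteq> b"
  have c: "a + b \<noteq> 0" using h char2 by (metis add_right_cancel)
  have d: "a \<noteq> a + b" using h by (metis add_0_right add_left_cancel)
  have e: "b \<noteq> a + b" using h by (metis add_0 add_right_cancel)
  have "a + b + (a + b) = 0" by (rule char2)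
  thus ?thesis unfolding STS_H_def using h c d e by blast
qed

lemma sum3: "x \<noteq> y \<Longrightarrow> x \<noteq> z \<Longrightarrow> y \<noteq> z \<Longrightarrow> sum id {x,y,z} = (x + y + z :: 'a::comm_monoid_add)"
  by (simp add: add.assoc)

lemma eq_of_sum: "(x::bit^'m) + y = 0 \<Longrightarrow> x = y"
proof -
  assume "x + y = 0"
  have "x = x + (y + y)" by (simp add: char2)
  also have "\<dots> = (x + y) + y" by (simp add: add.assoc)
  also have "\<dots> = y" using \<open>x + y = 0\<close> by simp
  finally show ?thesis .
qed

lemma additive:
  fixes g :: "bit^'m \<Rightarrow> bit^'m"
  assumes gN: "\<And>x. x \<noteq> 0 \<Longrightarrow> g x \<noteq> 0" and inj: "inj_on g nonzero_vecs"
    and pres: "blocks_image g STS_H \<subseteq> STS_H"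
    and h: "a \<noteq> 0" "b \<noteq> 0" "a \<noteq> b"
  shows "g (a + b) = g a + g b"
proof -
  have c: "a + b \<noteq> 0" using h char2 by (metis add_right_cancel)
  have d: "a \<noteq> a + b" using h by (metis add_0_right add_left_cancel)
  have e: "b \<noteq> a + b" using h by (metis add_0 add_right_cancel)
  have "g ` {a, b, a + b} \<in> STS_H" using pres triple_in[OF h] unfolding blocks_image_def by blast
  then obtain p q r where P: "g ` {a, b, a + b} = {p,q,r}" "p \<noteq> q" "p \<noteq> r" "q \<noteq> r" "p + q + r = 0"
    unfolding STS_H_def by blast
  have N: "a \<in> nonzero_vecs" "b \<in> nonzero_vecs" "a + b \<in> nonzero_vecs" using h c by (auto simp: nonzero_vecs_def)
  have d1: "g a \<noteq> g b" "g a \<noteq> g (a+b)" "g b \<noteq> g (a+b)"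
    using inj N h d e by (metis inj_on_def)+
  have "g a + g b + g (a+b) = sum id (g ` {a, b, a + b})" using d1 by (simp add: sum3)
  also have "\<dots> = 0" using P by (simp add: sum3 add.assoc)
  finally have "g a + g b + g (a+b) = 0" .
  hence "g a + g b + g (a+b) + (g a + g b) = g a + g b" by simp
  thus ?thesis using eq_of_sum[of "g (a+b)" "g a + g b"] \<open>g a + g b + g (a+b) = 0\<close>
    by (simp add: add.commute)
qed

lemma lin:
  fixes g :: "bit^'m \<Rightarrow> bit^'m"
  assumes gN: "\<And>x. x \<noteq> 0 \<Longrightarrow> g x \<noteq> 0" and inj: "inj_on g nonzero_vecs"
    and pres: "blocks_image g STS_H \<subseteq> STS_H"
    and A: "A \<subseteq> nonzero_vecs"
  shows "(\<Sum>x\<in>A. g x) = 0 \<longleftrightarrow> (\<Sum>x\<in>A. x) = 0"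
proof -
  define gh where "gh x = (if x = 0 then 0 else g x)" for x
  have add: "gh (a + b) = gh a + gh b" for a b
  proof (cases "a = 0 \<or> b = 0 \<or> a = b")
    case True
    then show ?thesis unfolding gh_def using char2 by auto
  next
    case False
    hence "a + b \<noteq> 0" using char2 by (metis add_right_cancel)
    then show ?thesis using False additive[OF gN inj pres, of a b] unfolding gh_def by auto
  qed
  have z: "gh 0 = 0" by (simp add: gh_def)
  have s: "gh (sum f B) = (\<Sum>x\<in>B. gh (f x))" for f :: "bit^'m \<Rightarrow> bit^'m" and B
    by (induction B rule: infinite_finite_induct) (auto simp: z add)
  have "(\<Sum>x\<in>A. g x) = (\<Sum>x\<in>A. gh x)"
    using A by (intro sum.cong) (auto simp: gh_def nonzero_vecs_def)
  also have "\<dots> = gh (\<Sum>x\<in>A. x)" using s[of "\<lambda>x. x" A] by simp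
  finally show ?thesis using gN by (simp add: gh_def)
qed

lemma Fnz: "bij F \<Longrightarrow> F 0 = 0 \<Longrightarrow> x \<noteq> 0 \<Longrightarrow> F x \<noteq> 0"
  by (metis bij_is_inj injD)

theorem mainTheorem11:
  fixes F1 F2 :: "bit ^ 'm \<Rightarrow> bit ^ 'm"
  assumes "bij F1" and "bij F2" and "F1 0 = 0" and "F2 0 = 0"
    and "self_emb_iso F1 F2"
  shows "codes_equiv nonzero_vecs (code_F F1) (code_F F2)"
proof -
  let ?N = "nonzero_vecs :: (bit^'m) set"
  obtain \<sigma> where sb: "bij_betw \<sigma> ?N ?N" and cs:
    "(blocks_image \<sigma> STS_H = STS_H \<and>
          blocks_image \<sigma> (blocks_image F1 STS_H) = blocks_image F2 STS_H) \<or>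
         (blocks_image \<sigma> STS_H = blocks_image F2 STS_H \<and>
          blocks_image \<sigma> (blocks_image F1 STS_H) = STS_H)"
    using assms(5) unfolding self_emb_iso_def by blast
  define \<pi> where "\<pi> = inv F2 \<circ> \<sigma> \<circ> F1"
  have bi2: "bij (inv F2)" using assms(2) by (simp add: bij_imp_bij_inv)
  have i20: "inv F2 0 = 0" using assms(2,4) by (metis bij_inv_eq_iff)
  have F2i: "F2 (inv F2 y) = y" for y using assms(2) by (meson bij_inv_eq_iff)
  have sN: "x \<noteq> 0 \<Longrightarrow> \<sigma> x \<noteq> 0" for x using sb
    unfolding bij_betw_def nonzero_vecs_def by blast
  have sinj: "inj_on \<sigma> ?N" using sb by (simp add: bij_betw_def)
  have F1N: "x \<noteq> 0 \<Longrightarrow> F1 x \<noteq> 0" for x using Fnz assms(1,3) by blast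
  have i2N: "x \<noteq> 0 \<Longrightarrow> inv F2 x \<noteq> 0" for x using Fnz bi2 i20 by blast
  have F1S: "F1 ` ?N = ?N"
    using assms(1,3) unfolding nonzero_vecs_def by (metis bij_def image_set_diff image_empty image_insert)
  have i2S: "inv F2 ` ?N = ?N"
    using bi2 i20 unfolding nonzero_vecs_def by (metis bij_def image_set_diff image_empty image_insert)
  have b1: "bij_betw F1 ?N ?N" using assms(1) F1S
    by (metis bij_betw_def bij_def inj_on_subset subset_UNIV)
  have b2: "bij_betw (inv F2) ?N ?N" using bi2 i2S
    by (metis bij_betw_def bij_def inj_on_subset subset_UNIV)
  have pib: "bij_betw \<pi> ?N ?N" unfolding \<pi>_def
    using bij_betw_trans[OF b1 bij_betw_trans[OF sb b2]] by (simp add: comp_assoc)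
  have inj1: "inj F1" using assms(1) bij_is_inj by blast
  have F2pi: "F2 (\<pi> x) = \<sigma> (F1 x)" for x by (simp add: \<pi>_def F2i)
  have key: "\<pi> ` A \<in> code_F F2 \<longleftrightarrow> A \<in> code_F F1" if A: "A \<subseteq> ?N" for A
  proof -
    have piA: "\<pi> ` A \<subseteq> ?N" using pib A unfolding bij_betw_def by blast
    have injA: "inj_on \<pi> A" using pib A unfolding bij_betw_def by (blast intro: inj_on_subset)
    have e1: "(\<Sum>y\<in>\<pi> ` A. y) = (\<Sum>x\<in>A. \<pi> x)" using sum.reindex[OF injA] by simp
    have e2: "(\<Sum>y\<in>\<pi> ` A. F2 y) = (\<Sum>x\<in>A. \<sigma> (F1 x))" using sum.reindex[OF injA, of F2] by (simp add: F2pi o_def)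
    have F1A: "F1 ` A \<subseteq> ?N" using A F1S by blast
    have r1: "(\<Sum>y\<in>F1 ` A. h y) = (\<Sum>x\<in>A. h (F1 x))" for h :: "bit^'m \<Rightarrow> bit^'m"
      using sum.reindex[OF inj_on_subset[OF inj1 subset_UNIV]] by simp
    from cs show ?thesis
    proof
      assume c: "blocks_image \<sigma> STS_H = STS_H \<and>
          blocks_image \<sigma> (blocks_image F1 STS_H) = blocks_image F2 STS_H"
      have "blocks_image \<pi> STS_H = STS_H" unfolding \<pi>_def blocks_image_comp
        using c blocks_image_inv[OF assms(2)] by simp
      hence l1: "(\<Sum>x\<in>A. \<pi> x) = 0 \<longleftrightarrow> (\<Sum>x\<in>A. x) = 0"
        using lin[of \<pi> A] A pib F1N sN i2N unfolding bij_betw_def \<pi>_def by auto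
      have l2: "(\<Sum>x\<in>A. \<sigma> (F1 x)) = 0 \<longleftrightarrow> (\<Sum>x\<in>A. F1 x) = 0"
        using lin[of \<sigma> "F1 ` A"] F1A sN sinj c r1[of \<sigma>] r1[of id] by auto
      show ?thesis unfolding code_F_def using A piA e1 e2 l1 l2 by auto
    next
      assume c: "blocks_image \<sigma> STS_H = blocks_image F2 STS_H \<and>
          blocks_image \<sigma> (blocks_image F1 STS_H) = STS_H"
      have m: "blocks_image (inv F2 \<circ> \<sigma>) STS_H = STS_H" unfolding blocks_image_comp
        using c blocks_image_inv[OF assms(2)] by simp
      have r: "blocks_image (\<sigma> \<circ> F1) STS_H = STS_H" unfolding blocks_image_comp
        using c by simp
      have minj: "inj_on (inv F2 \<circ> \<sigma>) ?N"
        using sinj bi2 sb by (auto simp: bij_betw_def bij_def intro: comp_inj_on inj_on_subset)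
      have rinj: "inj_on (\<sigma> \<circ> F1) ?N"
        using sinj inj1 F1S by (auto intro: comp_inj_on inj_on_subset)
      have l1: "(\<Sum>x\<in>A. \<pi> x) = 0 \<longleftrightarrow> (\<Sum>x\<in>A. F1 x) = 0"
        using lin[of "inv F2 \<circ> \<sigma>" "F1 ` A"] F1A sN i2N minj m r1[of "inv F2 \<circ> \<sigma>"] r1[of id]
        unfolding \<pi>_def by auto
      have l2: "(\<Sum>x\<in>A. \<sigma> (F1 x)) = 0 \<longleftrightarrow> (\<Sum>x\<in>A. x) = 0"
        using lin[of "\<sigma> \<circ> F1" A] A sN F1N rinj r by auto
      show ?thesis unfolding code_F_def using A piA e1 e2 l1 l2 by auto
    qed
  qed
  have eq: "code_F F2 = (\<lambda>c. \<pi> ` c) ` code_F F1"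
  proof
    show "(\<lambda>c. \<pi> ` c) ` code_F F1 \<subseteq> code_F F2"
    proof
      fix B assume "B \<in> (\<lambda>c. \<pi> ` c) ` code_F F1"
      then obtain A where A: "A \<in> code_F F1" "B = \<pi> ` A" by blast
      have "A \<subseteq> ?N" using A(1) by (simp add: code_F_def)
      thus "B \<in> code_F F2" using key[of A] A by simp
    qed
  next
    show "code_F F2 \<subseteq> (\<lambda>c. \<pi> ` c) ` code_F F1"
    proof
      fix B assume B: "B \<in> code_F F2"
      hence BN: "B \<subseteq> ?N" by (simp add: code_F_def)
      define A where "A = {x \<in> ?N. \<pi> x \<in> B}"
      have AN: "A \<subseteq> ?N" by (auto simp: A_def)
      have "\<pi> ` A = B"
      proof
        show "\<pi> ` A \<subseteq> B" unfolding A_def by blast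
      next
        show "B \<subseteq> \<pi> ` A"
        proof
          fix y assume y: "y \<in> B"
          hence "y \<in> \<pi> ` ?N" using BN pib by (simp add: bij_betw_def subset_iff)
          then obtain x where "x \<in> ?N" "y = \<pi> x" by blast
          thus "y \<in> \<pi> ` A" using y unfolding A_def by blast
        qed
      qed
      moreover have "A \<in> code_F F1" using key[OF AN] B \<open>\<pi> ` A = B\<close> by simp
      ultimately show "B \<in> (\<lambda>c. \<pi> ` c) ` code_F F1" by blast
    qed
  qed
  have l: "(\<lambda>c. (\<pi> ` c - {}) \<union> ({} - \<pi> ` c)) = (\<lambda>c. \<pi> ` c)" by (rule ext) simp
  have "bij_betw \<pi> ?N ?N \<and> {} \<subseteq> ?N \<and>
        code_F F2 = (\<lambda>c. (\<pi> ` c - {}) \<union> ({} - \<pi> ` c)) ` code_F F1"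
    using pib eq l by (simp only: empty_subsetI simp_thms)
  thus ?thesis unfolding codes_equiv_def by blast
qed

end
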